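(* Let $0<\beta<1$. Suppose that for each $x\in\mathcal{X}$ the function $y\mapsto f(x,y)$ is convex on $\mathbb{R}^d$. Then the non-risk region $\mathcal{R}_{\mathcal{X}}(\beta)^c=\mathbb{R}^d\setminus\mathcal{R}_{\mathcal{X}}(\beta)$ is convex.
   Context: Let $Y$ be a random vector in $\mathbb{R}^d$, $\mathcal{X}\subseteq\mathbb{R}^k$ a set of decisions and $f:\mathcal{X}\times\mathbb{R}^d\to\mathbb{R}$ a loss function with $f(x,Y)$ measurable for all $x$. Write $F_x(z)=\mathbb{P}(f(x,Y)\le z)$ and $F_x^{-1}(\beta)=\inf\{z: F_x(z)\ge\beta\}$. The $\beta$-risk region of $x$ is $\mathcal{R}_x(\beta)=\{y\in\mathbb{R}^d: f(x,y)\ge F_x^{-1}(\beta)\}$ and $\mathcal{R}_{\mathcal{X}}(\beta)=\bigcup_{x\in\mathcal{X}}\mathcal{R}_x(\beta)$. *)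

theory Defs
  imports "HOL-Probability.Probability"
begin

definition loss_cdf :: "'m measure \<Rightarrow> ('m \<Rightarrow> 'a) \<Rightarrow> ('x \<Rightarrow> 'a \<Rightarrow> real) \<Rightarrow> 'x \<Rightarrow> real \<Rightarrow> real" where
  "loss_cdf M Y f x z = measure M {\<omega> \<in> space M. f x (Y \<omega>) \<le> z}"

definition loss_quantile :: "'m measure \<Rightarrow> ('m \<Rightarrow> 'a) \<Rightarrow> ('x \<Rightarrow> 'a \<Rightarrow> real) \<Rightarrow> 'x \<Rightarrow> real \<Rightarrow> real" where
  "loss_quantile M Y f x \<beta> = Inf {z. loss_cdf M Y f x z \<ge> \<beta>}"

definition risk_region :: "'m measure \<Rightarrow> ('m \<Rightarrow> 'a) \<Rightarrow> ('x \<Rightarrow> 'a \<Rightarrow> real) \<Rightarrow> 'x \<Rightarrow> real \<Rightarrow> 'a set" where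
  "risk_region M Y f x \<beta> = {y. f x y \<ge> loss_quantile M Y f x \<beta>}"

definition risk_region_set :: "'m measure \<Rightarrow> ('m \<Rightarrow> 'a) \<Rightarrow> ('x \<Rightarrow> 'a \<Rightarrow> real) \<Rightarrow> 'x set \<Rightarrow> real \<Rightarrow> 'a set" where
  "risk_region_set M Y f X \<beta> = (\<Union>x\<in>X. risk_region M Y f x \<beta>)"

end

theory Submission
  imports Defs
begin

theorem mainTheorem4:
  fixes M :: "'m measure"
    and Y :: "'m \<Rightarrow> real ^ 'd"
    and X :: "(real ^ 'k) set"
    and f :: "real ^ 'k \<Rightarrow> real ^ 'd \<Rightarrow> real"
    and \<beta> :: real
  assumes "prob_space M"
    and "Y \<in> borel_measurable M"
    and "\<And>x. (\<lambda>\<omega>. f x (Y \<omega>)) \<in> borel_measurable M"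
    and "0 < \<beta>" and "\<beta> < 1"
    and "\<And>x. x \<in> X \<Longrightarrow> convex_on UNIV (f x)"
  shows "convex (UNIV - risk_region_set M Y f X \<beta>)"
proof -
  have eq: "UNIV - risk_region_set M Y f X \<beta> =
    (\<Inter>x\<in>X. {y. f x y < loss_quantile M Y f x \<beta>})"
    unfolding risk_region_set_def risk_region_def by (auto simp: not_le, fastforce)
  show ?thesis unfolding eq
  proof (rule convex_INT)
    fix x assume "x \<in> X"
    hence "convex_on UNIV (f x)" using assms(6) by blast
    show "convex {y. f x y < loss_quantile M Y f x \<beta>}"
    proof (rule convexI)
      fix a b :: "real ^ 'd" and u v :: real
      assume a: "a \<in> {y. f x y < loss_quantile M Y f x \<beta>}"
        and b: "b \<in> {y. f x y < loss_quantile M Y f x \<beta>}"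
        and uv: "0 \<le> u" "0 \<le> v" "u + v = 1"
      have "f x (u *\<^sub>R a + v *\<^sub>R b) \<le> u * f x a + v * f x b"
        using \<open>convex_on UNIV (f x)\<close> uv by (simp add: convex_on_def)
      also have "\<dots> < loss_quantile M Y f x \<beta>"
      proof (cases "u = 0")
        case True thus ?thesis using b uv by simp
      next
        case False
        hence "u * f x a < u * loss_quantile M Y f x \<beta>" using a uv by simp
        moreover have "v * f x b \<le> v * loss_quantile M Y f x \<beta>"
          using b uv by (intro mult_left_mono) auto
        ultimately show ?thesis using uv by (metis add_less_le_mono distrib_right mult_1)
      qed
      finally show "u *\<^sub>R a + v *\<^sub>R b \<in> {y. f x y < loss_quantile M Y f x \<beta>}" by simp
    qed
  qed
qed

end
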